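(* In the setting described in the context, for every $i$ with $1\le i\le m-1$, $L_2(f_i)\le L_1(p_i,q_i)+L_1(q_i,p_{i+1})$, where $L_1$ is the $L_1$ distance and $L_2(f_i)$ is the Euclidean length of the phase $f_i$.
   Context: $P$ is a finite set of points in the plane, $s,t\in P$ distinct, and coordinates are chosen so that $t=(0,0)$ and $s$ lies in $C_2^t$ below the line $\ell_t^-=\{x+y=0\}$. Cones: $C_0^v=\{x\ge v_x,y\le v_y\}$, $C_1^v=\{x\ge v_x,y\ge v_y\}$, $C_2^v=\{x\le v_x,y\ge v_y\}$, $C_3^v=\{x\le v_x,y\le v_y\}$ with bisector directions $(1,-1),(1,1),(-1,1),(-1,-1)$. The $\Theta_4$-graph of $P$ has, for each $v\in P$ and cone $C_i^v$ containing a point of $P\setminus\{v\}$, a directed edge from $v$ to a point $w$ of $(P\setminus\{v\})\cap C_i^v$ minimizing the projection of $w-v$ onto the bisector direction (the neighbour of $v$ in $C_i^v$). Algorithm: for a vertex $v$, let $T(v,\ell_t^-)=C_1^v\cap\{x+y\le0\}$ if $v_x+v_y<0$, $T(v,\ell_t^-)=C_3^v\cap\{x+y\ge0\}$ if $v_x+v_y>0$, and $\{v\}$ if $v_x+v_y=0$; $v$ is clean if $T(v,\ell_t^-)$ contains no point of $P$ other than $v$. Starting at $v=s$, while $v\ne t$: if $v$ is not clean, take a sweeping step (go to the neighbour of $v$ in $C_1^v$, resp. $C_3^v$); otherwise take a greedy step (go to the neighbour of $v$ in the cone $C_i^v$ containing $t$). Let $(p_1,q_1),\dots,(p_{m-1},q_{m-1})$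 be, in order, the edges traversed by greedy steps, and set $p_m=t$. The phase $f_i$ ($1\le i\le m-1$) is the subpath of the algorithm's path from $p_i$ to $p_{i+1}$. *)

theory Defs
  imports Complex_Main
begin

type_synonym point = "real \<times> real"

fun cone :: "nat \<Rightarrow> point \<Rightarrow> point set" where
  "cone 0 v = {p. fst p \<ge> fst v \<and> snd p \<le> snd v}"
| "cone (Suc 0) v = {p. fst p \<ge> fst v \<and> snd p \<ge> snd v}"
| "cone (Suc (Suc 0)) v = {p. fst p \<le> fst v \<and> snd p \<ge> snd v}"
| "cone _ v = {p. fst p \<le> fst v \<and> snd p \<le> snd v}"

fun bisector :: "nat \<Rightarrow> point" where
  "bisector 0 = (1, -1)"
| "bisector (Suc 0) = (1, 1)"
| "bisector (Suc (Suc 0)) = (-1, 1)"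
| "bisector _ = (-1, -1)"

definition proj :: "nat \<Rightarrow> point \<Rightarrow> point \<Rightarrow> real" where
  "proj i v w = ((fst w - fst v) * fst (bisector i) + (snd w - snd v) * snd (bisector i)) / sqrt 2"

definition is_nbr :: "point set \<Rightarrow> point \<Rightarrow> nat \<Rightarrow> point \<Rightarrow> bool" where
  "is_nbr P v i w \<longleftrightarrow> w \<in> P \<and> w \<noteq> v \<and> w \<in> cone i v \<and>
     (\<forall>u \<in> P. u \<noteq> v \<and> u \<in> cone i v \<longrightarrow> proj i v w \<le> proj i v u)"

definition theta4 :: "point set \<Rightarrow> (point \<Rightarrow> nat \<Rightarrow> point) \<Rightarrow> bool" where
  "theta4 P nb \<longleftrightarrow> (\<forall>v \<in> P. \<forall>i < 4. (\<exists>u \<in> P. u \<noteq> v \<and> u \<in> cone i v) \<longrightarrow> is_nbr P v i (nb v i))"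

definition Tri :: "point \<Rightarrow> point set" where
  "Tri v = (if fst v + snd v < 0 then cone 1 v \<inter> {p. fst p + snd p \<le> 0}
            else if fst v + snd v > 0 then cone 3 v \<inter> {p. fst p + snd p \<ge> 0}
            else {v})"

definition clean :: "point set \<Rightarrow> point \<Rightarrow> bool" where
  "clean P v \<longleftrightarrow> Tri v \<inter> P \<subseteq> {v}"

definition alg_step :: "point set \<Rightarrow> (point \<Rightarrow> nat \<Rightarrow> point) \<Rightarrow> point \<Rightarrow> point \<Rightarrow> point \<Rightarrow> bool" where
  "alg_step P nb t v w \<longleftrightarrow>
     (if \<not> clean P v then w = nb v (if fst v + snd v < 0 then 1 else 3)
      else (\<exists>i < 4. t \<in> cone i v \<and> w = nb v i))"

definition alg_run :: "point set \<Rightarrow> (point \<Rightarrow> nat \<Rightarrow> point) \<Rightarrow> point \<Rightarrow> point \<Rightarrow> point list \<Rightarrow> bool" where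
  "alg_run P nb s t vs \<longleftrightarrow> vs \<noteq> [] \<and> hd vs = s \<and> last vs = t \<and> t \<notin> set (butlast vs) \<and>
     (\<forall>k < length vs - 1. alg_step P nb t (vs ! k) (vs ! Suc k))"

definition greedy_idx :: "point set \<Rightarrow> point list \<Rightarrow> nat set" where
  "greedy_idx P vs = {k. k < length vs - 1 \<and> clean P (vs ! k)}"

definition phase_end :: "point set \<Rightarrow> point list \<Rightarrow> nat \<Rightarrow> nat" where
  "phase_end P vs a = (if \<exists>j. a < j \<and> j \<in> greedy_idx P vs
                        then (LEAST j. a < j \<and> j \<in> greedy_idx P vs) else length vs - 1)"

definition L1 :: "point \<Rightarrow> point \<Rightarrow> real" where
  "L1 p q = \<bar>fst p - fst q\<bar> + \<bar>snd p - snd q\<bar>"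

definition L2 :: "point \<Rightarrow> point \<Rightarrow> real" where
  "L2 p q = sqrt ((fst p - fst q)^2 + (snd p - snd q)^2)"

definition subpath_len :: "point list \<Rightarrow> nat \<Rightarrow> nat \<Rightarrow> real" where
  "subpath_len vs a b = (\<Sum>k \<in> {a..<b}. L2 (vs ! k) (vs ! Suc k))"

end

theory Submission
  imports Defs
begin

lemma L2_le_L1: "L2 p q \<le> L1 p q"
  unfolding L2_def L1_def
proof (rule real_le_lsqrt)
  show "0 \<le> \<bar>fst p - fst q\<bar> + \<bar>snd p - snd q\<bar>" by simp
  have "(\<bar>fst p - fst q\<bar> + \<bar>snd p - snd q\<bar>)^2 = (fst p - fst q)^2 + (snd p - snd q)^2 + 2*\<bar>fst p - fst q\<bar>*\<bar>snd p - snd q\<bar>"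
    by (simp add: power2_eq_square algebra_simps abs_mult_self_eq)
  then show "(fst p - fst q)\<^sup>2 + (snd p - snd q)\<^sup>2 \<le> (\<bar>fst p - fst q\<bar> + \<bar>snd p - snd q\<bar>)\<^sup>2"
    by simp
qed

lemma tele_up:
  fixes x :: "nat \<Rightarrow> real"
  shows "m \<le> n \<Longrightarrow> (\<forall>k. m \<le> k \<and> k < n \<longrightarrow> x k \<le> x (Suc k)) \<Longrightarrow>
    (\<Sum>k\<in>{m..<n}. \<bar>x k - x (Suc k)\<bar>) = \<bar>x m - x n\<bar>"
proof (induction n)
  case 0 then show ?case by simp
next
  case (Suc n)
  show ?case
  proof (cases "m = Suc n")
    case True then show ?thesis by simp
  next
    case False
    then have mn: "m \<le> n" using Suc.prems by simp
    have ih: "(\<Sum>k\<in>{m..<n}. \<bar>x k - x (Suc k)\<bar>) = \<bar>x m - x n\<bar>"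
      using Suc.IH mn Suc.prems by simp
    have "x m \<le> x n"
      using mn Suc.prems(2)
    proof (induction n rule: dec_induct)
      case base then show ?case by simp
    next
      case (step j) then show ?case by force
    qed
    moreover have "x n \<le> x (Suc n)" using Suc.prems mn by simp
    ultimately show ?thesis using ih mn by simp
  qed
qed

lemma tele_down:
  fixes x :: "nat \<Rightarrow> real"
  assumes "m \<le> n" "\<forall>k. m \<le> k \<and> k < n \<longrightarrow> x k \<ge> x (Suc k)"
  shows "(\<Sum>k\<in>{m..<n}. \<bar>x k - x (Suc k)\<bar>) = \<bar>x m - x n\<bar>"
proof -
  have "(\<Sum>k\<in>{m..<n}. \<bar>(-x) k - (-x) (Suc k)\<bar>) = \<bar>(-x) m - (-x) n\<bar>"
    by (rule tele_up) (use assms in auto)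
  then show ?thesis by (simp add: abs_minus_commute)
qed

lemma cone3: "cone 3 v = {p. fst p \<le> fst v \<and> snd p \<le> snd v}"
  by (simp add: numeral_eq_Suc)

lemma step_props:
  assumes th: "theta4 P nb" and vP: "v \<in> P" and nc: "\<not> clean P v" and st: "alg_step P nb t v w"
  shows "w \<in> P \<and> (fst v + snd v < 0 \<longrightarrow> w \<in> cone 1 v \<and> fst w + snd w \<le> 0)
        \<and> (fst v + snd v > 0 \<longrightarrow> w \<in> cone 3 v \<and> fst w + snd w \<ge> 0)
        \<and> fst v + snd v \<noteq> 0"
proof -
  obtain u where u: "u \<in> Tri v" "u \<in> P" "u \<noteq> v" using nc unfolding clean_def by auto
  have ne: "fst v + snd v \<noteq> 0" using u unfolding Tri_def by (auto split: if_splits)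
  show ?thesis
  proof (cases "fst v + snd v < 0")
    case True
    have w: "w = nb v 1" using st nc True unfolding alg_step_def by simp
    have uc: "u \<in> cone 1 v" "fst u + snd u \<le> 0" using u True unfolding Tri_def by auto
    have ex: "\<exists>u\<in>P. u \<noteq> v \<and> u \<in> cone 1 v" using u uc by blast
    from th vP have "\<forall>i<4. (\<exists>u\<in>P. u \<noteq> v \<and> u \<in> cone i v) \<longrightarrow> is_nbr P v i (nb v i)"
      unfolding theta4_def by blast
    from this[rule_format, of 1] ex have nbr: "is_nbr P v 1 w" using w by simp
    then have "proj 1 v w \<le> proj 1 v u" "w \<in> P" "w \<in> cone 1 v" using u uc unfolding is_nbr_def by auto
    then have "fst w + snd w \<le> fst u + snd u"
      unfolding proj_def by (simp add: divide_le_cancel)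
    then show ?thesis using True \<open>w \<in> P\<close> \<open>w \<in> cone 1 v\<close> uc by auto
  next
    case False
    then have pos: "fst v + snd v > 0" using ne by simp
    have w: "w = nb v 3" using st nc False unfolding alg_step_def by simp
    have uc: "u \<in> cone 3 v" "fst u + snd u \<ge> 0" using u pos unfolding Tri_def by auto
    have ex: "\<exists>u\<in>P. u \<noteq> v \<and> u \<in> cone 3 v" using u uc by blast
    from th vP have "\<forall>i<4. (\<exists>u\<in>P. u \<noteq> v \<and> u \<in> cone i v) \<longrightarrow> is_nbr P v i (nb v i)"
      unfolding theta4_def by blast
    from this[rule_format, of 3] ex have nbr: "is_nbr P v 3 w" using w by simp
    then have "proj 3 v w \<le> proj 3 v u" "w \<in> P" "w \<in> cone 3 v" using u uc unfolding is_nbr_def by auto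
    then have "fst w + snd w \<ge> fst u + snd u"
      unfolding proj_def by (simp add: numeral_eq_Suc divide_le_cancel)
    then show ?thesis using pos \<open>w \<in> P\<close> \<open>w \<in> cone 3 v\<close> uc by auto
  qed
qed

lemma greedy_P:
  assumes th: "theta4 P nb" and vP: "v \<in> P" and c: "clean P v" and st: "alg_step P nb t v w"
    and tP: "t \<in> P" and vt: "v \<noteq> t"
  shows "w \<in> P"
proof -
  obtain i where i: "i < 4" "t \<in> cone i v" "w = nb v i" using st c unfolding alg_step_def by auto
  then have "is_nbr P v i w" using th vP tP vt unfolding theta4_def by metis
  then show ?thesis unfolding is_nbr_def by simp
qed

lemma run_in_P:
  assumes th: "theta4 P nb" and run: "alg_run P nb s t vs" and sP: "s \<in> P" and tP: "t \<in> P"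
  shows "k < length vs \<Longrightarrow> vs ! k \<in> P"
proof (induction k)
  case 0 then show ?case using run sP unfolding alg_run_def by (metis hd_conv_nth)
next
  case (Suc k)
  have k1: "k < length vs - 1" using Suc.prems by simp
  have st: "alg_step P nb t (vs ! k) (vs ! Suc k)" using run k1 unfolding alg_run_def by simp
  have "vs ! k \<in> set (butlast vs)" using k1 by (metis length_butlast nth_butlast nth_mem)
  then have vt: "vs ! k \<noteq> t" using run unfolding alg_run_def by auto
  have vP: "vs ! k \<in> P" using Suc by simp
  show ?case
  proof (cases "clean P (vs ! k)")
    case True then show ?thesis using greedy_P[OF th vP True st tP vt] by simp
  next
    case False then show ?thesis using step_props[OF th vP False st] by simp
  qed
qed


lemma L1_sum_split:
  "(\<Sum>k\<in>{m..<n}. L1 (vs ! k) (vs ! Suc k)) =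
   (\<Sum>k\<in>{m..<n}. \<bar>fst (vs ! k) - fst (vs ! Suc k)\<bar>) + (\<Sum>k\<in>{m..<n}. \<bar>snd (vs ! k) - snd (vs ! Suc k)\<bar>)"
  unfolding L1_def by (simp add: sum.distrib)

theorem mainTheorem7:
  fixes P :: "point set" and s t :: point and nb :: "point \<Rightarrow> nat \<Rightarrow> point" and vs :: "point list"
  assumes "finite P" and "s \<in> P" and "t \<in> P" and "s \<noteq> t"
    and "t = (0, 0)" and "s \<in> cone 2 t" and "fst s + snd s < 0"
    and "theta4 P nb"
    and "alg_run P nb s t vs"
    and "a \<in> greedy_idx P vs"
  shows "subpath_len vs a (phase_end P vs a)
           \<le> L1 (vs ! a) (vs ! Suc a) + L1 (vs ! Suc a) (vs ! phase_end P vs a)"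
proof -
  note th = assms(8) and run = assms(9)
  define e where "e = phase_end P vs a"
  have a1: "a < length vs - 1" using assms(10) unfolding greedy_idx_def by simp
  have ea: "Suc a \<le> e \<and> e \<le> length vs - 1 \<and> (\<forall>k. a < k \<and> k < e \<longrightarrow> k \<notin> greedy_idx P vs)"
  proof (cases "\<exists>j. a < j \<and> j \<in> greedy_idx P vs")
    case True
    then have ed: "e = (LEAST j. a < j \<and> j \<in> greedy_idx P vs)" unfolding e_def phase_end_def by simp
    from True obtain j where j: "a < j \<and> j \<in> greedy_idx P vs" by blast
    have 1: "a < e \<and> e \<in> greedy_idx P vs" unfolding ed by (rule LeastI[of _ j]) (rule j)
    have 2: "\<forall>k. a < k \<and> k < e \<longrightarrow> k \<notin> greedy_idx P vs"
      unfolding ed using not_less_Least by blast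
    show ?thesis using 1 2 unfolding greedy_idx_def by auto
  next
    case False
    then show ?thesis unfolding e_def phase_end_def using a1 by auto
  qed
  have nc: "\<not> clean P (vs ! k) \<and> k < length vs - 1" if "Suc a \<le> k" "k < e" for k
    using ea that unfolding greedy_idx_def by auto
  have inP: "vs ! k \<in> P" if "k < length vs" for k
    using run_in_P[OF th run assms(2) assms(3) that] .
  have sp: "vs ! Suc k \<in> P \<and> (fst (vs!k) + snd (vs!k) < 0 \<longrightarrow> vs ! Suc k \<in> cone 1 (vs!k) \<and> fst (vs ! Suc k) + snd (vs ! Suc k) \<le> 0)
        \<and> (fst (vs!k) + snd (vs!k) > 0 \<longrightarrow> vs ! Suc k \<in> cone 3 (vs!k) \<and> fst (vs ! Suc k) + snd (vs ! Suc k) \<ge> 0)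
        \<and> fst (vs!k) + snd (vs!k) \<noteq> 0" if "Suc a \<le> k" "k < e" for k
  proof -
    have k: "\<not> clean P (vs ! k)" "k < length vs - 1" using nc[OF that] by auto
    have st: "alg_step P nb t (vs ! k) (vs ! Suc k)" using run k unfolding alg_run_def by simp
    show ?thesis using step_props[OF th inP k(1) st] k by simp
  qed
  define g where "g k = fst (vs!k) + snd (vs!k)" for k
  have sweep: "(\<Sum>k\<in>{Suc a..<e}. L1 (vs ! k) (vs ! Suc k)) = L1 (vs ! Suc a) (vs ! e)"
  proof (cases "Suc a < e")
    case False
    then have "e = Suc a" using ea by simp
    then show ?thesis by (simp add: L1_def)
  next
    case True
    have g0: "g (Suc a) \<noteq> 0" using sp[of "Suc a"] True unfolding g_def by simp
    show ?thesis
    proof (cases "g (Suc a) < 0")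
      case True
      have inv: "k < e \<longrightarrow> g k < 0" if "Suc a \<le> k" for k
        using that
      proof (induction k rule: dec_induct)
        case base then show ?case using True by simp
      next
        case (step j)
        show ?case
        proof
          assume "Suc j < e"
          then have "g (Suc j) \<le> 0" "g (Suc j) \<noteq> 0" using step sp[of j] sp[of "Suc j"] unfolding g_def by auto
          then show "g (Suc j) < 0" by simp
        qed
      qed
      have mono: "fst (vs!k) \<le> fst (vs ! Suc k) \<and> snd (vs!k) \<le> snd (vs ! Suc k)" if "Suc a \<le> k" "k < e" for k
        using inv[OF that(1)] that sp[OF that] unfolding g_def by auto
      have "(\<Sum>k\<in>{Suc a..<e}. \<bar>fst (vs ! k) - fst (vs ! Suc k)\<bar>) = \<bar>fst (vs ! Suc a) - fst (vs ! e)\<bar>"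
        using tele_up[of "Suc a" e "\<lambda>k. fst (vs ! k)"] ea mono by simp
      moreover have "(\<Sum>k\<in>{Suc a..<e}. \<bar>snd (vs ! k) - snd (vs ! Suc k)\<bar>) = \<bar>snd (vs ! Suc a) - snd (vs ! e)\<bar>"
        using tele_up[of "Suc a" e "\<lambda>k. snd (vs ! k)"] ea mono by simp
      ultimately show ?thesis unfolding L1_sum_split by (simp add: L1_def)
    next
      case False
      then have True': "g (Suc a) > 0" using g0 by simp
      have inv: "k < e \<longrightarrow> g k > 0" if "Suc a \<le> k" for k
        using that
      proof (induction k rule: dec_induct)
        case base then show ?case using True' by simp
      next
        case (step j)
        show ?case
        proof
          assume "Suc j < e"
          then have "g (Suc j) \<ge> 0" "g (Suc j) \<noteq> 0" using step sp[of j] sp[of "Suc j"] unfolding g_def by auto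
          then show "g (Suc j) > 0" by simp
        qed
      qed
      have mono: "fst (vs!k) \<ge> fst (vs ! Suc k) \<and> snd (vs!k) \<ge> snd (vs ! Suc k)" if "Suc a \<le> k" "k < e" for k
        using inv[OF that(1)] that sp[OF that] unfolding g_def by (auto simp: cone3)
      have "(\<Sum>k\<in>{Suc a..<e}. \<bar>fst (vs ! k) - fst (vs ! Suc k)\<bar>) = \<bar>fst (vs ! Suc a) - fst (vs ! e)\<bar>"
        using tele_down[of "Suc a" e "\<lambda>k. fst (vs ! k)"] ea mono by simp
      moreover have "(\<Sum>k\<in>{Suc a..<e}. \<bar>snd (vs ! k) - snd (vs ! Suc k)\<bar>) = \<bar>snd (vs ! Suc a) - snd (vs ! e)\<bar>"
        using tele_down[of "Suc a" e "\<lambda>k. snd (vs ! k)"] ea mono by simp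
      ultimately show ?thesis unfolding L1_sum_split by (simp add: L1_def)
    qed
  qed
  have split: "subpath_len vs a e = L2 (vs ! a) (vs ! Suc a) + (\<Sum>k\<in>{Suc a..<e}. L2 (vs ! k) (vs ! Suc k))"
    unfolding subpath_len_def using ea by (simp add: sum.atLeast_Suc_lessThan)
  have "(\<Sum>k\<in>{Suc a..<e}. L2 (vs ! k) (vs ! Suc k)) \<le> (\<Sum>k\<in>{Suc a..<e}. L1 (vs ! k) (vs ! Suc k))"
    by (rule sum_mono) (rule L2_le_L1)
  then have "subpath_len vs a e \<le> L1 (vs ! a) (vs ! Suc a) + L1 (vs ! Suc a) (vs ! e)"
    using split sweep L2_le_L1[of "vs ! a" "vs ! Suc a"] by linarith
  then show ?thesis unfolding e_def .
qed

end
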